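(* Let $G=(V,E)$ be a finite, simple, connected graph with $|V|\geq 3$ and let $d\in\mathrm{Der}(\mathcal{A}(G))$ with $d(e_i)=\sum_{k\in V}d_{ik}e_k$. If $d_{k\ell}\neq 0$ for some $k,\ell\in V$ with $k\neq\ell$, then there is a twin class $\mathcal{T}\subset V$ with $|\mathcal{T}|\geq 3$ such that $k,\ell\in\mathcal{T}$.
   Context: Throughout, $\mathbb{K}$ is a field of characteristic $0$. A graph $G=(V,E)$ has vertex set $V=\{1,\dots,n\}$ and is assumed finite, simple (no loops, no multiple edges) and connected. $\mathcal{N}(i)$ denotes the set of neighbors of vertex $i$, and $(a_{ij})$ is the adjacency matrix ($a_{ij}=1$ if $i,j$ are adjacent, $0$ otherwise). The evolution algebra $\mathcal{A}(G)$ is the $\mathbb{K}$-algebra with basis $\{e_i: i\in V\}$ and product $e_i\cdot e_i=\sum_{k\in V}a_{ik}e_k=\sum_{k\in\mathcal{N}(i)}e_k$ and $e_i\cdot e_j=0$ for $i\neq j$. A derivation of $\mathcal{A}(G)$ is a linear map $d:\mathcal{A}(G)\to\mathcal{A}(G)$ with $d(u\cdot v)=d(u)\cdot v+u\cdot d(v)$ for all $u,v$; $\mathrm{Der}(\mathcal{A}(G))$ is the space of derivations, and for $d$ in it we write $d(e_i)=\sum_{k\in V}d_{ik}e_k$. Two vertices $i,j$ are twins if $\mathcal{N}(i)=\mathcal{N}(j)$; this is an equivalence relation whose classes are called twin classes. *)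

theory Defs
  imports Main "HOL-Library.Cardinality"
begin

text \<open>Elements of the
evolution algebra A(G) over the field 'k are coefficient vectors
u :: 'v \<Rightarrow> 'k with respect to the natural basis e_i (e_i = indicator of i).\<close>

definition simple_graph :: "('v \<Rightarrow> 'v \<Rightarrow> bool) \<Rightarrow> bool" where
  "simple_graph E \<longleftrightarrow> (\<forall>i j. E i j \<longrightarrow> E j i) \<and> (\<forall>i. \<not> E i i)"

definition connected_graph :: "('v \<Rightarrow> 'v \<Rightarrow> bool) \<Rightarrow> bool" where
  "connected_graph E \<longleftrightarrow> (\<forall>i j. E\<^sup>*\<^sup>* i j)"

definition nbhd :: "('v \<Rightarrow> 'v \<Rightarrow> bool) \<Rightarrow> 'v \<Rightarrow> 'v set" where
  "nbhd E i = {k. E i k}"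

definition adj :: "('v \<Rightarrow> 'v \<Rightarrow> bool) \<Rightarrow> 'v \<Rightarrow> 'v \<Rightarrow> 'k::field" where
  "adj E i k = (if E i k then 1 else 0)"

text \<open>Product of A(G): (\<Sum> u_i e_i)(\<Sum> w_j e_j) = \<Sum>_i u_i w_i e_i e_i = \<Sum>_i u_i w_i \<Sum>_k a_ik e_k.\<close>
definition evo_mult :: "('v::finite \<Rightarrow> 'v \<Rightarrow> bool) \<Rightarrow> ('v \<Rightarrow> 'k::field) \<Rightarrow> ('v \<Rightarrow> 'k) \<Rightarrow> ('v \<Rightarrow> 'k)" where
  "evo_mult E u w = (\<lambda>k. \<Sum>i\<in>UNIV. u i * w i * adj E i k)"

text \<open>The linear map with matrix D, i.e. d(e_i) = \<Sum>_k D i k e_k.\<close>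
definition lin_map :: "('v::finite \<Rightarrow> 'v \<Rightarrow> 'k::field) \<Rightarrow> ('v \<Rightarrow> 'k) \<Rightarrow> ('v \<Rightarrow> 'k)" where
  "lin_map D u = (\<lambda>k. \<Sum>i\<in>UNIV. u i * D i k)"

definition is_derivation :: "('v::finite \<Rightarrow> 'v \<Rightarrow> bool) \<Rightarrow> ('v \<Rightarrow> 'v \<Rightarrow> 'k::field) \<Rightarrow> bool" where
  "is_derivation E D \<longleftrightarrow>
     (\<forall>u w. lin_map D (evo_mult E u w) = (\<lambda>k. evo_mult E (lin_map D u) w k + evo_mult E u (lin_map D w) k))"

definition twin_class :: "('v \<Rightarrow> 'v \<Rightarrow> bool) \<Rightarrow> 'v set \<Rightarrow> bool" where
  "twin_class E T \<longleftrightarrow> (\<exists>i. T = {j. nbhd E j = nbhd E i})"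

end

theory Submission
  imports Defs
begin

lemma em1: "evo_mult E (\<lambda>x. if x = i then 1 else 0) w = (\<lambda>q. w i * adj E i q)"
proof -
  have "\<And>x q. (if x = i then 1 else 0) * w x * adj E x q = (if x = i then w i * adj E i q else 0)" by simp
  then show ?thesis unfolding evo_mult_def by simp
qed

lemma em2: "evo_mult E w (\<lambda>x. if x = i then 1 else 0) = (\<lambda>q. w i * adj E i q)"
proof -
  have "\<And>x q. w x * (if x = i then 1 else 0) * adj E x q = (if x = i then w i * adj E i q else 0)" by simp
  then show ?thesis unfolding evo_mult_def by simp
qed

lemma lm1: "lin_map D (\<lambda>x. if x = i then 1 else 0) = D i"
proof -
  have "\<And>x q. (if x = i then 1 else 0) * D x q = (if x = i then D i q else 0)" by simp
  then show ?thesis unfolding lin_map_def by simp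
qed

lemma lmz: "lin_map D (\<lambda>q. 0) = (\<lambda>q. 0)"
  unfolding lin_map_def by simp

lemma derA:
  fixes E :: "'v::finite \<Rightarrow> 'v \<Rightarrow> bool" and D :: "'v \<Rightarrow> 'v \<Rightarrow> 'k::field"
  assumes "is_derivation E D" "i \<noteq> j"
  shows "D i j * adj E j q + D j i * adj E i q = 0"
proof -
  let ?ei = "\<lambda>x. if x = i then (1::'k) else 0"
  let ?ej = "\<lambda>x. if x = j then (1::'k) else 0"
  have "evo_mult E ?ei ?ej = (\<lambda>q. 0)" using assms(2) by (simp add: em1)
  with assms(1)[unfolded is_derivation_def, rule_format, of ?ei ?ej]
  have "(\<lambda>q. 0) = (\<lambda>q. evo_mult E (D i) ?ej q + evo_mult E ?ei (D j) q)"
    by (simp add: lmz lm1)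
  then show ?thesis by (simp add: em1 em2 fun_eq_iff)
qed

lemma derB:
  fixes E :: "'v::finite \<Rightarrow> 'v \<Rightarrow> bool" and D :: "'v \<Rightarrow> 'v \<Rightarrow> 'k::field"
  assumes "is_derivation E D"
  shows "(\<Sum>p\<in>UNIV. adj E i p * D p q) = 2 * D i i * adj E i q"
proof -
  let ?ei = "\<lambda>x. if x = i then (1::'k) else 0"
  have "evo_mult E ?ei ?ei = (\<lambda>q. adj E i q)" by (simp add: em1)
  with assms(1)[unfolded is_derivation_def, rule_format, of ?ei ?ei]
  have "lin_map D (\<lambda>q. adj E i q) = (\<lambda>q. evo_mult E (D i) ?ei q + evo_mult E ?ei (D i) q)"
    by (simp add: lm1)
  then show ?thesis by (simp add: em1 em2 fun_eq_iff lin_map_def)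
qed

lemma nbr:
  assumes "connected_graph E" "i \<noteq> j"
  shows "\<exists>m. E i m"
proof -
  have "E\<^sup>*\<^sup>* i j" using assms(1) unfolding connected_graph_def by blast
  then show ?thesis using assms(2) by (cases rule: converse_rtranclpE) auto
qed

lemma twin:
  fixes E :: "'v::finite \<Rightarrow> 'v \<Rightarrow> bool" and D :: "'v \<Rightarrow> 'v \<Rightarrow> 'k::field"
  assumes "connected_graph E" "is_derivation E D" "i \<noteq> j" "D i j \<noteq> 0"
  shows "nbhd E i = nbhd E j \<and> D j i = - D i j"
proof -
  obtain q where q: "E j q" using nbr[OF assms(1)] assms(3) by metis
  have "D i j + D j i * adj E i q = 0" using derA[OF assms(2,3), of q] q by (simp add: adj_def)
  then have ji: "D j i \<noteq> 0" and iq: "E i q" using assms(4) by (auto simp: adj_def split: if_splits)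
  have eq: "E i r \<longleftrightarrow> E j r" for r
    using derA[OF assms(2,3), of r] assms(4) ji by (auto simp: adj_def split: if_splits)
  have "D i j + D j i = 0" using derA[OF assms(2,3), of q] q iq by (simp add: adj_def)
  then show ?thesis using eq unfolding nbhd_def by (auto simp: add_eq_0_iff)
qed

theorem lemma3p5:
  fixes E :: "'v::finite \<Rightarrow> 'v \<Rightarrow> bool"
    and D :: "'v \<Rightarrow> 'v \<Rightarrow> 'k::field_char_0"
  assumes "simple_graph E"
    and "connected_graph E"
    and "CARD('v) \<ge> 3"
    and "is_derivation E D"
    and "k \<noteq> l" and "D k l \<noteq> 0"
  shows "\<exists>T. twin_class E T \<and> card T \<ge> 3 \<and> k \<in> T \<and> l \<in> T"
proof (rule ccontr)
  assume nt: "\<not> ?thesis"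
  define T where "T = {j. nbhd E j = nbhd E k}"
  have tw: "nbhd E k = nbhd E l" and lk: "D l k = - D k l"
    using twin[OF assms(2,4,5,6)] by auto
  have tc: "twin_class E T" unfolding T_def twin_class_def by blast
  have kT: "k \<in> T" and lT: "l \<in> T" using tw by (auto simp: T_def)
  have "card T < 3" using nt tc kT lT by auto
  moreover have "{k,l} \<subseteq> T" using kT lT by auto
  moreover have "card {k,l} = 2" using assms(5) by auto
  ultimately have "T = {k,l}"
    by (metis card_mono card_subset_eq finite le_antisym less_Suc_eq_le numeral_3_eq_3 numeral_2_eq_2)
  then have onlykl: "nbhd E p = nbhd E k \<Longrightarrow> p = k \<or> p = l" for p by (auto simp: T_def)
  have sym: "E a b \<Longrightarrow> E b a" for a b using assms(1) unfolding simple_graph_def by blast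
  obtain m where km: "E k m" using nbr[OF assms(2,5)] by metis
  have lm: "E l m" using km tw unfolding nbhd_def by blast
  have mk: "E m k" and ml: "E m l" using km lm sym by auto
  have zero: "adj E m p * D p q = 0" if "p \<noteq> k" "p \<noteq> l" "q \<in> {k,l}" for p q
  proof (cases "D p q = 0")
    case False
    have "p \<noteq> q" using that by auto
    from twin[OF assms(2,4) this False] have "nbhd E p = nbhd E q" by simp
    then have "nbhd E p = nbhd E k" using that tw by auto
    then show ?thesis using onlykl that by blast
  qed simp
  have red: "(\<Sum>p\<in>UNIV. adj E m p * D p q) = adj E m k * D k q + adj E m l * D l q" if "q \<in> {k,l}" for q
  proof -
    have "(\<Sum>p\<in>UNIV. adj E m p * D p q) = (\<Sum>p\<in>{k,l}. adj E m p * D p q)"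
      by (rule sum.mono_neutral_right) (use zero that in auto)
    then show ?thesis using assms(5) by simp
  qed
  have e1: "D k l + D l l = 2 * D m m"
    using derB[OF assms(4), of m l] red[of l] mk ml by (simp add: adj_def)
  have e2: "D k k + D l k = 2 * D m m"
    using derB[OF assms(4), of m k] red[of k] mk ml by (simp add: adj_def)
  have adjeq: "adj E k p = adj E l p" for p
    using tw unfolding nbhd_def adj_def by (metis mem_Collect_eq)
  have "2 * D k k * adj E k m = 2 * D l l * adj E l m"
  proof -
    have "(\<Sum>p\<in>UNIV. adj E k p * D p m) = (\<Sum>p\<in>UNIV. adj E l p * D p m)"
      by (simp only: adjeq)
    then show ?thesis using derB[OF assms(4), of k m] derB[OF assms(4), of l m] by simp
  qed
  then have "D k k = D l l" using km lm by (simp add: adj_def)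
  then have "2 * D k l = 0" using e1 e2 lk by (simp add: algebra_simps)
  then show False using assms(6) by simp
qed

end
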